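(* Let $X$ be a uniformly convex and uniformly smooth Banach space, $D_0$ a dislocation group on $X$ and $D\subset D_0$. Let $(u_k)\subset X$ be bounded, $M\in\mathbb N$, and let $(g_k^{(n)})_k\subset D$, $w^{(n)}\in X$, $n=1,\dots,M$, satisfy $g^{(1)}_k=I$, $(g^{(n)}_k)^{-1}u_k\rightharpoondown w^{(n)}$ for $n=1,\dots,M$, and $(g_k^{(n)})^{-1}g_k^{(m)}\rightharpoonup0$ whenever $n<m\le M$. Suppose there is a sequence $(g_k^{(M+1)})\subset D$ such that, along a subsequence, $(g_k^{(M+1)})^{-1}\big(u_k-w^{(1)}-g_k^{(2)}w^{(2)}-\dots-g_k^{(M)}w^{(M)}\big)\rightharpoondown w^{(M+1)}\ne0$. Then (along that subsequence) $(g_k^{(n)})^{-1}g_k^{(M+1)}\rightharpoonup0$ for $n=1,\dots,M$.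
   Context: Δ-convergence: $x_k\rightharpoondown x$ if for every $y\in X$, $\limsup_k(\|x_k-x\|-\|x_k-y\|)\le0$. Operator convergence $g_k\rightharpoonup g$: $g_kx\rightharpoonup gx$ weakly for all $x$; strong convergence: $g_kx\to gx$ in norm for all $x$. A group $D_0$ of bijective linear isometries of $X$ is a dislocation group if: $(\ast)$ whenever $(g_k)\subset D_0$ and $g_k\not\rightharpoonup0$, some subsequence has both $(g_{k_j})$ and $(g_{k_j}^{-1})$ strongly convergent; and $(\ast\ast)$ whenever $u_k\rightharpoondown0$, $w\in X$, $(g_k)\subset D_0$, $g_k\rightharpoonup0$, then $u_k+g_kw\rightharpoondown0$. *)

theory Defs
  imports "HOL-Analysis.Analysis"
begin

definition uniformly_convex :: "'a::real_normed_vector itself \<Rightarrow> bool" where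
  "uniformly_convex _ \<longleftrightarrow>
     (\<forall>e>0. \<exists>d>0. \<forall>x y::'a. norm x \<le> 1 \<and> norm y \<le> 1 \<and> norm (x - y) \<ge> e
        \<longrightarrow> norm ((1/2) *\<^sub>R (x + y)) \<le> 1 - d)"

text \<open>Uniform smoothness: modulus of smoothness rho(t)/t tends to 0 as t tends to 0+,
  where rho(t) = sup over unit x, y of (norm(x+ty)+norm(x-ty))/2 - 1.\<close>
definition uniformly_smooth :: "'a::real_normed_vector itself \<Rightarrow> bool" where
  "uniformly_smooth _ \<longleftrightarrow>
     (\<forall>e>0. \<exists>d>0. \<forall>t. 0 < t \<and> t < d \<longrightarrow>
        (\<forall>x y::'a. norm x = 1 \<and> norm y = 1 \<longrightarrow>
           (norm (x + t *\<^sub>R y) + norm (x - t *\<^sub>R y)) / 2 - 1 \<le> e * t))"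

definition weak_conv :: "(nat \<Rightarrow> 'a::real_normed_vector) \<Rightarrow> 'a \<Rightarrow> bool" where
  "weak_conv xs x \<longleftrightarrow>
     (\<forall>f :: 'a \<Rightarrow> real. bounded_linear f \<longrightarrow> (\<lambda>k. f (xs k)) \<longlonglongrightarrow> f x)"

definition delta_conv :: "(nat \<Rightarrow> 'a::real_normed_vector) \<Rightarrow> 'a \<Rightarrow> bool" where
  "delta_conv xs x \<longleftrightarrow>
     (\<forall>y. limsup (\<lambda>k. ereal (norm (xs k - x) - norm (xs k - y))) \<le> 0)"

definition op_weak_conv :: "(nat \<Rightarrow> 'a \<Rightarrow> 'a::real_normed_vector) \<Rightarrow> ('a \<Rightarrow> 'a) \<Rightarrow> bool" where
  "op_weak_conv gs g \<longleftrightarrow> (\<forall>x. weak_conv (\<lambda>k. gs k x) (g x))"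

definition op_strong_conv :: "(nat \<Rightarrow> 'a \<Rightarrow> 'a::real_normed_vector) \<Rightarrow> ('a \<Rightarrow> 'a) \<Rightarrow> bool" where
  "op_strong_conv gs g \<longleftrightarrow> (\<forall>x. (\<lambda>k. gs k x) \<longlonglongrightarrow> g x)"

definition lin_isometry :: "('a::real_normed_vector \<Rightarrow> 'a) \<Rightarrow> bool" where
  "lin_isometry g \<longleftrightarrow> linear g \<and> bij g \<and> (\<forall>x. norm (g x) = norm x)"

definition isometry_group :: "('a::real_normed_vector \<Rightarrow> 'a) set \<Rightarrow> bool" where
  "isometry_group D0 \<longleftrightarrow> (\<forall>g\<in>D0. lin_isometry g) \<and> id \<in> D0 \<and>
     (\<forall>g\<in>D0. \<forall>h\<in>D0. g \<circ> h \<in> D0) \<and> (\<forall>g\<in>D0. inv g \<in> D0)"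

definition dislocation_group :: "('a::real_normed_vector \<Rightarrow> 'a) set \<Rightarrow> bool" where
  "dislocation_group D0 \<longleftrightarrow> isometry_group D0 \<and>
     (\<forall>gs. (\<forall>k. gs k \<in> D0) \<and> \<not> op_weak_conv gs (\<lambda>_. 0) \<longrightarrow>
        (\<exists>r h h'. strict_mono r \<and> op_strong_conv (\<lambda>j. gs (r j)) h
                 \<and> op_strong_conv (\<lambda>j. inv (gs (r j))) h')) \<and>
     (\<forall>us w gs. delta_conv us 0 \<and> (\<forall>k. gs k \<in> D0) \<and> op_weak_conv gs (\<lambda>_. 0) \<longrightarrow>
        delta_conv (\<lambda>k. us k + gs k w) 0)"

end

theory Submission
  imports Defs
begin

lemma limsup_le0_iff:
  fixes f :: "nat \<Rightarrow> real"
  shows "limsup (\<lambda>k. ereal (f k)) \<le> 0 \<longleftrightarrow> (\<forall>e>0. eventually (\<lambda>k. f k < e) sequentially)"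
proof
  assume h: "limsup (\<lambda>k. ereal (f k)) \<le> 0"
  show "\<forall>e>0. eventually (\<lambda>k. f k < e) sequentially"
  proof (intro allI impI)
    fix e :: real assume "e > 0"
    then have "ereal e > limsup (\<lambda>k. ereal (f k))" using h by (simp add: order.strict_trans1)
    from Limsup_lessD[OF this] show "eventually (\<lambda>k. f k < e) sequentially" by simp
  qed
next
  assume h: "\<forall>e>0. eventually (\<lambda>k. f k < e) sequentially"
  show "limsup (\<lambda>k. ereal (f k)) \<le> 0"
    unfolding Limsup_le_iff
  proof (intro allI impI)
    fix y :: ereal assume y: "y > 0"
    show "eventually (\<lambda>x. y > ereal (f x)) sequentially"
    proof (cases y)
      case (real r)
      with y have "r > 0" by simp
      with h have "eventually (\<lambda>k. f k < r) sequentially" by blast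
      then show ?thesis by eventually_elim (simp add: real)
    next
      case PInf then show ?thesis by simp
    next
      case MInf with y show ?thesis by simp
    qed
  qed
qed

lemma delta_conv_iff:
  "delta_conv xs x \<longleftrightarrow> (\<forall>y. \<forall>e>0. eventually (\<lambda>k. norm (xs k - x) - norm (xs k - y) < e) sequentially)"
  unfolding delta_conv_def limsup_le0_iff by blast

lemma delta_conv_shift: "delta_conv xs x \<longleftrightarrow> delta_conv (\<lambda>k. xs k - x) 0"
  unfolding delta_conv_iff
  apply (rule iffI)
   apply (intro allI impI)
  subgoal for y e
    apply (drule spec[of _ "y + x"], drule spec[of _ e]) by (simp add: algebra_simps)
  apply (intro allI impI)
  subgoal for y e
    apply (drule spec[of _ "y - x"], drule spec[of _ e]) by (simp add: algebra_simps)
  done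

lemma delta_conv_subseq: "delta_conv xs x \<Longrightarrow> strict_mono r \<Longrightarrow> delta_conv (\<lambda>j. xs (r j)) x"
  unfolding delta_conv_iff using eventually_subseq by blast

lemma strong_delta: "(xs \<longlonglongrightarrow> x) \<Longrightarrow> delta_conv xs x"
  unfolding delta_conv_iff
proof (intro allI impI)
  fix y and e :: real assume t: "xs \<longlonglongrightarrow> x" and e: "e > 0"
  have "((\<lambda>k. norm (xs k - x) - norm (xs k - y)) \<longlongrightarrow> norm (x - x) - norm (x - y)) sequentially"
    by (intro tendsto_intros t)
  moreover have "norm (x - x) - norm (x - y) \<le> 0" by simp
  then have "norm (x - x) - norm (x - y) < e" using e by linarith
  ultimately show "eventually (\<lambda>k. norm (xs k - x) - norm (xs k - y) < e) sequentially"
    by (rule order_tendstoD)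
qed

lemma uc_step:
  fixes e R :: real
  assumes uc: "uniformly_convex TYPE('a::real_normed_vector)" and e: "e > 0" and R: "R > 0"
  obtains d where "d > 0" "\<And>p q::'a. norm (p - q) = e \<Longrightarrow> norm p \<le> R \<Longrightarrow> norm q \<le> R \<Longrightarrow>
       norm ((1/2) *\<^sub>R (p + q)) \<le> (1 - d) * max (norm p) (norm q)"
proof -
  have eR: "e / R > 0" using e R by simp
  from uc[unfolded uniformly_convex_def, rule_format, OF eR] obtain d where d: "d > 0" and
    H0: "\<forall>x y::'a. norm x \<le> 1 \<and> norm y \<le> 1 \<and> norm (x - y) \<ge> e / R
        \<longrightarrow> norm ((1/2) *\<^sub>R (x + y)) \<le> 1 - d" by blast
  have H: "\<And>x y::'a. norm x \<le> 1 \<Longrightarrow> norm y \<le> 1 \<Longrightarrow> norm (x - y) \<ge> e / R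
        \<Longrightarrow> norm ((1/2) *\<^sub>R (x + y)) \<le> 1 - d" using H0 by blast
  have main: "norm ((1/2) *\<^sub>R (p + q)) \<le> (1 - d) * max (norm p) (norm q)"
    if pq: "norm (p - q) = e" "norm p \<le> R" "norm q \<le> R" for p q :: 'a
  proof -
    define m where "m = max (norm p) (norm q)"
    have "e \<le> norm p + norm q" using pq(1) norm_triangle_ineq4[of p q] by simp
    then have m0: "m > 0" using e unfolding m_def by linarith
    have mR: "m \<le> R" using pq unfolding m_def by simp
    have n1: "norm ((1/m) *\<^sub>R p) \<le> 1" using m0 unfolding m_def by (simp add: field_simps)
    have n2: "norm ((1/m) *\<^sub>R q) \<le> 1" using m0 unfolding m_def by (simp add: field_simps)
    have "norm ((1/m) *\<^sub>R p - (1/m) *\<^sub>R q) = e / m"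
      using m0 pq(1) by (simp add: scaleR_diff_right[symmetric])
    also have "e / m \<ge> e / R" using divide_left_mono[OF mR, of e] m0 e R by simp
    finally have "norm ((1/m) *\<^sub>R p - (1/m) *\<^sub>R q) \<ge> e / R" .
    from H[OF n1 n2 this] have X: "norm ((1/2) *\<^sub>R ((1/m) *\<^sub>R p + (1/m) *\<^sub>R q)) \<le> 1 - d" .
    define v where "v = (1/2) *\<^sub>R (p + q)"
    have "(1/2) *\<^sub>R ((1/m) *\<^sub>R p + (1/m) *\<^sub>R q) = (1/m) *\<^sub>R v"
      unfolding v_def by (simp add: scaleR_add_right mult.commute[of m 2])
    with X have X2: "norm ((1/m) *\<^sub>R v) \<le> 1 - d" by simp
    have "norm ((1/m) *\<^sub>R v) = norm v / m" using m0 by simp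
    with X2 have "norm v / m \<le> 1 - d" by linarith
    then have "norm v \<le> (1 - d) * m" using pos_divide_le_eq[OF m0] by simp
    then show ?thesis unfolding v_def m_def .
  qed
  show ?thesis using that[OF d] main by blast
qed

lemma delta_unique:
  fixes a :: "nat \<Rightarrow> 'a::real_normed_vector"
  assumes uc: "uniformly_convex TYPE('a)" and b: "bounded (range a)"
    and dx: "delta_conv a x" and dy: "delta_conv a y"
  shows "x = y"
proof (rule ccontr)
  assume "x \<noteq> y"
  define e where "e = norm (x - y)"
  have e: "e > 0" using \<open>x \<noteq> y\<close> unfolding e_def by simp
  from b obtain B where B: "\<And>k. norm (a k) \<le> B" unfolding bounded_iff by blast
  define R where "R = B + norm x + norm y + 1"
  have R: "R > 0" using B[of 0] norm_ge_zero[of "a 0"] norm_ge_zero[of x] norm_ge_zero[of y]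
    unfolding R_def by linarith
  obtain d where d: "d > 0" and H: "\<And>p q::'a. norm (p - q) = e \<Longrightarrow> norm p \<le> R \<Longrightarrow> norm q \<le> R \<Longrightarrow>
       norm ((1/2) *\<^sub>R (p + q)) \<le> (1 - d) * max (norm p) (norm q)"
    using uc_step[OF uc e R] by blast
  define z where "z = (1/2) *\<^sub>R (x + y)"
  have de: "d * e / 4 > 0" using d e by simp
  have ev1: "eventually (\<lambda>k. norm (a k - x) - norm (a k - z) < d * e / 4) sequentially"
    using dx de unfolding delta_conv_iff by blast
  have ev2: "eventually (\<lambda>k. norm (a k - y) - norm (a k - z) < d * e / 4) sequentially"
    using dy de unfolding delta_conv_iff by blast
  from eventually_conj[OF ev1 ev2] obtain k where
    k1: "norm (a k - x) - norm (a k - z) < d * e / 4" and k2: "norm (a k - y) - norm (a k - z) < d * e / 4"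
    using eventually_sequentially by auto
  define p where "p = a k - x"
  define q where "q = a k - y"
  have pq: "norm (p - q) = e" unfolding p_def q_def e_def by (simp add: norm_minus_commute)
  have pR: "norm p \<le> R" unfolding p_def R_def using B[of k] norm_triangle_ineq4[of "a k" x] norm_ge_zero[of y] by linarith
  have qR: "norm q \<le> R" unfolding q_def R_def using B[of k] norm_triangle_ineq4[of "a k" y] norm_ge_zero[of x] by linarith
  have "p + q = 2 *\<^sub>R (a k) - (x + y)" by (simp add: p_def q_def algebra_simps scaleR_2)
  then have hz: "(1/2) *\<^sub>R (p + q) = a k - z" unfolding z_def by (simp add: scaleR_diff_right)
  from H[OF pq pR qR] have Hz: "norm (a k - z) \<le> (1 - d) * max (norm p) (norm q)" by (simp add: hz)
  define m where "m = max (norm p) (norm q)"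
  have "e \<le> norm p + norm q" using pq norm_triangle_ineq4[of p q] by simp
  moreover have "norm p \<le> m" "norm q \<le> m" unfolding m_def by auto
  ultimately have me: "m \<ge> e / 2" by linarith
  have "m = norm p \<or> m = norm q" unfolding m_def by auto
  then have "m - norm (a k - z) < d * e / 4" using k1 k2 unfolding p_def q_def by auto
  with Hz have "m - (1 - d) * m < d * e / 4" unfolding m_def by linarith
  then have "d * m < d * (e / 4)" by (simp add: algebra_simps)
  then have "m < e / 4" using d by simp
  with me e show False by linarith
qed


lemma grp:
  assumes "dislocation_group D0" "g \<in> D0"
  shows "linear g" "bij g" "\<And>x. norm (g x) = norm x" "inv g \<in> D0"
    "\<And>h. h \<in> D0 \<Longrightarrow> g \<circ> h \<in> D0"
  using assms unfolding dislocation_group_def isometry_group_def lin_isometry_def by auto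

lemma disl_star:
  assumes "dislocation_group D0" "\<And>k. gs k \<in> D0" "\<not> op_weak_conv gs (\<lambda>_. 0)"
  obtains r h h' where "strict_mono r" "op_strong_conv (\<lambda>j. gs (r j)) h"
    "op_strong_conv (\<lambda>j. inv (gs (r j))) h'"
  using assms unfolding dislocation_group_def by blast

lemma disl_2star:
  assumes "dislocation_group D0" "delta_conv us 0" "\<And>k. gs k \<in> D0" "op_weak_conv gs (\<lambda>_. 0)"
  shows "delta_conv (\<lambda>k. us k + gs k w) 0"
  using assms unfolding dislocation_group_def by blast

lemma delta_zero_const: "delta_conv (\<lambda>_. 0) 0"
  unfolding delta_conv_iff
  by (simp, metis neg_le_0_iff_le norm_ge_zero order_le_less_trans)

lemma inv_weak:
  fixes gs :: "nat \<Rightarrow> 'a::real_normed_vector \<Rightarrow> 'a"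
  assumes D: "dislocation_group D0" and uc: "uniformly_convex TYPE('a)"
    and gs: "\<And>k. gs k \<in> D0" and wk: "op_weak_conv gs (\<lambda>_. 0)" and w0: "w \<noteq> (0::'a)"
  shows "op_weak_conv (\<lambda>k. inv (gs k)) (\<lambda>_. 0)"
proof (rule ccontr)
  assume na: "\<not> op_weak_conv (\<lambda>k. inv (gs k)) (\<lambda>_. 0)"
  have "\<And>k. inv (gs k) \<in> D0" using grp[OF D gs] by blast
  from disl_star[OF D this na] obtain s h h' where s: "strict_mono s"
    and st: "op_strong_conv (\<lambda>j. inv (inv (gs (s j)))) h'" by blast
  have ii: "inv (inv (gs k)) = gs k" for k using grp(2)[OF D gs] by (simp add: inv_inv_eq)
  have conv: "(\<lambda>j. gs (s j) w) \<longlonglongrightarrow> h' w" using st unfolding op_strong_conv_def ii by blast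
  have wk2: "op_weak_conv (\<lambda>j. gs (s j)) (\<lambda>_. 0)"
    using wk s unfolding op_weak_conv_def weak_conv_def
    using LIMSEQ_subseq_LIMSEQ[of _ _ s] by (simp add: comp_def) blast
  have d1: "delta_conv (\<lambda>j. 0 + gs (s j) w) 0"
    by (rule disl_2star[OF D delta_zero_const]) (use gs wk2 in auto)
  have d2: "delta_conv (\<lambda>j. gs (s j) w) (h' w)" by (rule strong_delta[OF conv])
  have nrm: "\<And>j. norm (gs (s j) w) = norm w" using grp(3)[OF D gs] by blast
  have b: "bounded (range (\<lambda>j. gs (s j) w))" unfolding bounded_iff using nrm by auto
  have "h' w = 0" using delta_unique[OF uc b d2] d1 by simp
  moreover have "(\<lambda>j. norm (gs (s j) w)) \<longlonglongrightarrow> norm (h' w)" by (intro tendsto_intros conv)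
  then have "(\<lambda>j. norm w) \<longlonglongrightarrow> norm (h' w)" using nrm by simp
  then have "norm w = norm (h' w)" using LIMSEQ_unique tendsto_const by blast
  ultimately show False using w0 by simp
qed

lemma sum_delta:
  assumes D: "dislocation_group D0" and S: "finite S"
    and F: "\<And>m. m \<in> S \<Longrightarrow> op_weak_conv (F m) (\<lambda>_. 0) \<and> (\<forall>k. F m k \<in> D0)"
    and a: "delta_conv a 0"
  shows "delta_conv (\<lambda>k. a k - (\<Sum>m\<in>S. F m k (c m))) 0"
  using S F
proof (induction S rule: finite_induct)
  case empty then show ?case using a by simp
next
  case (insert m S)
  have IH: "delta_conv (\<lambda>k. a k - (\<Sum>m\<in>S. F m k (c m))) 0" using insert by blast
  have Fm: "op_weak_conv (F m) (\<lambda>_. 0)" "\<And>k. F m k \<in> D0" using insert.prems by auto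
  have "delta_conv (\<lambda>k. (a k - (\<Sum>m\<in>S. F m k (c m))) + F m k (- c m)) 0"
    by (rule disl_2star[OF D IH Fm(2) Fm(1)])
  moreover have "F m k (- c m) = - F m k (c m)" for k
    using grp(1)[OF D Fm(2)] by (simp add: linear_neg)
  ultimately show ?case using insert.hyps by (simp add: algebra_simps)
qed

theorem lemma5p9:
  fixes D0 D :: "('a::banach \<Rightarrow> 'a) set"
    and u :: "nat \<Rightarrow> 'a"
    and M :: nat
    and g :: "nat \<Rightarrow> nat \<Rightarrow> 'a \<Rightarrow> 'a"
    and w :: "nat \<Rightarrow> 'a"
    and gM1 :: "nat \<Rightarrow> 'a \<Rightarrow> 'a"
    and wM1 :: 'a
    and r :: "nat \<Rightarrow> nat"
  assumes "uniformly_convex TYPE('a)"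
    and "uniformly_smooth TYPE('a)"
    and "dislocation_group D0"
    and "D \<subseteq> D0"
    and "bounded (range u)"
    and "M \<ge> 1"
    and "\<And>n k. n \<in> {1..M} \<Longrightarrow> g n k \<in> D"
    and "\<And>k. g 1 k = id"
    and "\<And>n. n \<in> {1..M} \<Longrightarrow> delta_conv (\<lambda>k. inv (g n k) (u k)) (w n)"
    and "\<And>n m. 1 \<le> n \<Longrightarrow> n < m \<Longrightarrow> m \<le> M \<Longrightarrow>
           op_weak_conv (\<lambda>k. inv (g n k) \<circ> g m k) (\<lambda>_. 0)"
    and "\<And>k. gM1 k \<in> D"
    and "strict_mono r"
    and "delta_conv (\<lambda>j. inv (gM1 (r j))
            (u (r j) - w 1 - (\<Sum>n=2..M. g n (r j) (w n)))) wM1"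
    and "wM1 \<noteq> 0"
  shows "\<forall>n\<in>{1..M}. op_weak_conv (\<lambda>j. inv (g n (r j)) \<circ> gM1 (r j)) (\<lambda>_. 0)"
proof
  fix n assume nM: "n \<in> {1..M}"
  note D = assms(3)
  note uc = assms(1)
  have gD0: "\<And>m k. m \<in> {1..M} \<Longrightarrow> g m k \<in> D0" using assms(4,7) by blast
  have gM1D0: "\<And>k. gM1 k \<in> D0" using assms(4,11) by blast
  define F where "F m k = inv (g n k) \<circ> g m k" for m k
  have FD0: "F m k \<in> D0" if "m \<in> {1..M}" for m k
    unfolding F_def using grp(5)[OF D grp(4)[OF D gD0[OF nM]] gD0[OF that]] by blast
  have Fw: "op_weak_conv (F m) (\<lambda>_. 0)" if m: "m \<in> {1..M} - {n}" for m
  proof (cases "n < m")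
    case True
    then show ?thesis unfolding F_def using assms(10)[of n m] nM m by (auto simp: fun_eq_iff)
  next
    case False
    with m have mn: "m < n" by auto
    have w1: "op_weak_conv (\<lambda>k. inv (g m k) \<circ> g n k) (\<lambda>_. 0)" using assms(10)[of m n] nM m mn by auto
    have inD: "\<And>k. inv (g m k) \<circ> g n k \<in> D0" using grp(5)[OF D grp(4)[OF D gD0[of m]] gD0[OF nM]] m by blast
    have "op_weak_conv (\<lambda>k. inv (inv (g m k) \<circ> g n k)) (\<lambda>_. 0)"
      by (rule inv_weak[OF D uc inD w1 assms(14)])
    moreover have "inv (inv (g m k) \<circ> g n k) = F m k" for k
    proof -
      have b1: "bij (inv (g m k))" using grp(2)[OF D gD0[of m]] m by (simp add: bij_imp_bij_inv)
      have b2: "bij (g n k)" using grp(2)[OF D gD0[OF nM]] .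
      have b3: "bij (g m k)" using grp(2)[OF D gD0[of m]] m by simp
      show ?thesis unfolding F_def using o_inv_distrib[OF b1 b2] inv_inv_eq[OF b3] by simp
    qed
    ultimately show ?thesis by simp
  qed
  define v where "v k = u k - w 1 - (\<Sum>m=2..M. g m k (w m))" for k
  have v_alt: "v k = u k - (\<Sum>m\<in>{1..M}. g m k (w m))" for k
  proof -
    have "(\<Sum>m\<in>{1..M}. g m k (w m)) = g 1 k (w 1) + (\<Sum>m=Suc 1..M. g m k (w m))"
      using assms(6) by (rule sum.atLeast_Suc_atMost)
    moreover have "Suc 1 = (2::nat)" by simp
    ultimately show ?thesis unfolding v_def using assms(8) by (simp only: id_apply) (simp add: algebra_simps)
  qed
  have Lv: "inv (g n k) (v k) = (inv (g n k) (u k) - w n) - (\<Sum>m\<in>{1..M}-{n}. F m k (w m))" for k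
  proof -
    have lin: "linear (inv (g n k))" using grp(1)[OF D grp(4)[OF D gD0[OF nM]]] by blast
    have inj: "inj (g n k)" using grp(2)[OF D gD0[OF nM]] bij_is_inj by blast
    have "inv (g n k) (v k) = inv (g n k) (u k) - inv (g n k) (\<Sum>m\<in>{1..M}. g m k (w m))"
      unfolding v_alt by (rule linear_diff[OF lin])
    also have "inv (g n k) (\<Sum>m\<in>{1..M}. g m k (w m)) = (\<Sum>m\<in>{1..M}. F m k (w m))"
      unfolding linear_sum[OF lin] F_def by (simp add: comp_def)
    also have "(\<Sum>m\<in>{1..M}. F m k (w m)) = F n k (w n) + (\<Sum>m\<in>{1..M}-{n}. F m k (w m))"
      by (rule sum.remove) (use nM in auto)
    also have "F n k (w n) = w n" unfolding F_def using inj by simp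
    finally show ?thesis by (simp only: diff_diff_eq)
  qed
  have a0: "delta_conv (\<lambda>k. inv (g n k) (u k) - w n) 0"
    by (rule delta_conv_shift[THEN iffD1, OF assms(9)[OF nM]])
  have "delta_conv (\<lambda>k. (inv (g n k) (u k) - w n) - (\<Sum>m\<in>{1..M}-{n}. F m k (w m))) 0"
    by (rule sum_delta[OF D _ _ a0]) (use Fw FD0 in auto)
  then have dv: "delta_conv (\<lambda>k. inv (g n k) (v k)) 0" unfolding Lv .
  have dvr: "delta_conv (\<lambda>j. inv (g n (r j)) (v (r j))) 0" by (rule delta_conv_subseq[OF dv assms(12)])
  show "op_weak_conv (\<lambda>j. inv (g n (r j)) \<circ> gM1 (r j)) (\<lambda>_. 0)"
  proof (rule ccontr)
    assume na: "\<not> op_weak_conv (\<lambda>j. inv (g n (r j)) \<circ> gM1 (r j)) (\<lambda>_. 0)"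
    have HD0: "\<And>j. inv (g n (r j)) \<circ> gM1 (r j) \<in> D0" using grp(5)[OF D grp(4)[OF D gD0[OF nM]] gM1D0] by blast
    from disl_star[OF D HD0 na] obtain s h where s: "strict_mono s"
      and st: "op_strong_conv (\<lambda>j. inv (g n (r (s j))) \<circ> gM1 (r (s j))) h" by blast
    define H where "H j = inv (g n (r (s j))) \<circ> gM1 (r (s j))" for j
    define y where "y j = inv (g n (r (s j))) (v (r (s j)))" for j
    define a where "a j = inv (gM1 (r (s j))) (v (r (s j)))" for j
    have dy: "delta_conv y 0" unfolding y_def by (rule delta_conv_subseq[OF dvr s])
    have HD: "H j \<in> D0" for j unfolding H_def using HD0 by blast
    have Ha: "H j (a j) = y j" for j
    proof -
      have "surj (gM1 (r (s j)))" using grp(2)[OF D gM1D0] bij_is_surj by blast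
      then show ?thesis unfolding H_def a_def y_def by (simp add: surj_f_inv_f)
    qed
    have na_eq: "norm (a j) = norm (y j)" for j
      unfolding a_def y_def using grp(3)[OF D grp(4)[OF D gD0[OF nM]]] grp(3)[OF D grp(4)[OF D gM1D0]] by simp
    have naz: "norm (a j - z) = norm (y j - H j z)" for j z
    proof -
      have "norm (a j - z) = norm (H j (a j - z))" using grp(3)[OF D HD] by simp
      also have "H j (a j - z) = y j - H j z" using grp(1)[OF D HD] Ha by (simp add: linear_diff)
      finally show ?thesis .
    qed
    have da0: "delta_conv a 0"
      unfolding delta_conv_iff
    proof (intro allI impI)
      fix z and e :: real assume e: "e > 0"
      have e1: "eventually (\<lambda>j. norm (y j - 0) - norm (y j - h z) < e / 2) sequentially"
        using dy half_gt_zero[OF e] unfolding delta_conv_iff by blast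
      have cz: "(\<lambda>j. H j z) \<longlonglongrightarrow> h z" using st unfolding op_strong_conv_def H_def by blast
      have "(\<lambda>j. norm (H j z - h z)) \<longlonglongrightarrow> norm (h z - h z)" by (intro tendsto_intros cz)
      then have "(\<lambda>j. norm (H j z - h z)) \<longlonglongrightarrow> 0" by simp
      from order_tendstoD(2)[OF this half_gt_zero[OF e]]
      have e2: "eventually (\<lambda>j. norm (H j z - h z) < e / 2) sequentially" .
      show "eventually (\<lambda>j. norm (a j - 0) - norm (a j - z) < e) sequentially"
        using e1 e2
      proof eventually_elim
        case (elim j)
        have "norm (y j - h z) \<le> norm (y j - H j z) + norm (H j z - h z)"
          using norm_triangle_ineq[of "y j - H j z" "H j z - h z"] by simp
        then show ?case using elim na_eq[of j] naz[of j z] by simp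
      qed
    qed
    have daw: "delta_conv a wM1"
      using delta_conv_subseq[OF assms(13) s] unfolding a_def v_def by simp
    obtain B where B: "\<And>k. norm (u k) \<le> B" using assms(5) unfolding bounded_iff by blast
    have nv: "norm (v k) \<le> B + norm (w 1) + (\<Sum>m=2..M. norm (w m))" for k
    proof -
      have "norm (\<Sum>m=2..M. g m k (w m)) \<le> (\<Sum>m=2..M. norm (g m k (w m)))" by (rule norm_sum)
      also have "\<dots> = (\<Sum>m=2..M. norm (w m))"
        by (rule sum.cong) (use grp(3)[OF D gD0] in auto)
      finally have "norm (\<Sum>m=2..M. g m k (w m)) \<le> (\<Sum>m=2..M. norm (w m))" .
      moreover have "norm (v k) \<le> norm (u k) + norm (w 1) + norm (\<Sum>m=2..M. g m k (w m))"
        unfolding v_def using norm_triangle_ineq4[of "u k - w 1" "\<Sum>m=2..M. g m k (w m)"] norm_triangle_ineq4[of "u k" "w 1"] by linarith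
      ultimately show ?thesis using B[of k] by linarith
    qed
    have "bounded (range a)" unfolding bounded_iff
    proof (intro exI ballI)
      fix x assume "x \<in> range a"
      then obtain j where "x = a j" by blast
      then show "norm x \<le> B + norm (w 1) + (\<Sum>m=2..M. norm (w m))"
        using nv[of "r (s j)"] grp(3)[OF D grp(4)[OF D gM1D0]] unfolding a_def by simp
    qed
    from delta_unique[OF uc this daw da0] assms(14) show False by simp
  qed
qed

end
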